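(* For positive integers $m$ and $n$, \begin{align*} \overline{{m+n \brack n}}_{q,t} &= \overline{{m+n -1\brack n-1}}_{q,t} +q^n \overline{{m+n-1 \brack n}}_{q,t} + tq^n \overline{ {m+n-2 \brack n-1}}_{q,t},\\ \overline{{m+n \brack n}}_{q,t} &= \overline{{m+n -1\brack n}}_{q,t} +q^m \overline{{m+n-1 \brack n-1}}_{q,t} + tq^m \overline{{m+n-2 \brack n-1}}_{q,t}. \end{align*}
   Context: An overpartition is a partition in which the last occurrence of each distinct part size may be overlined; its weight $|\lambda|$ is the sum of its parts. For integers $0\le b\le a$, $\overline{{a \brack b}}_{q,t}=\sum_{\lambda} t^{\#_o(\lambda)} q^{|\lambda|}$, the sum over all overpartitions $\lambda$ with largest part at most $a-b$ and at most $b$ parts, $\#_o(\lambda)$ being the number of overlined parts. *)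

theory Defs
  imports Main "HOL-Library.Multiset"
begin

text \<open>An overpartition is represented as a pair (M, S): M is the multiset of
(positive) parts, S is the set of part sizes whose last occurrence is overlined
(so S is a subset of the distinct parts).\<close>

definition overpartitions_box :: "nat \<Rightarrow> nat \<Rightarrow> (nat multiset \<times> nat set) set" where
  "overpartitions_box k b =
     {(M, S). (\<forall>x \<in># M. 0 < x \<and> x \<le> k) \<and> size M \<le> b \<and> S \<subseteq> set_mset M}"

text \<open>Overpartition analogue of the Gaussian binomial, evaluated at q, t in an
arbitrary commutative ring: sum over overpartitions with largest part at most a - b
and at most b parts.\<close>

definition over_gauss :: "nat \<Rightarrow> nat \<Rightarrow> 'a::comm_ring_1 \<Rightarrow> 'a \<Rightarrow> 'a" where
  "over_gauss a b q t =
     (\<Sum>(M, S) \<in> overpartitions_box (a - b) b. t ^ card S * q ^ sum_mset M)"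

end

theory Submission
  imports Defs
begin

definition G :: "nat \<Rightarrow> nat \<Rightarrow> 'a::comm_ring_1 \<Rightarrow> 'a \<Rightarrow> 'a" where
  "G k b q t = (\<Sum>(M, S) \<in> overpartitions_box k b. t ^ card S * q ^ sum_mset M)"

lemma over_gauss_G: "over_gauss a b q t = G (a - b) b q t"
  by (simp add: over_gauss_def G_def)

lemma finite_box: "finite (overpartitions_box k b)"
proof -
  have "overpartitions_box k b \<subseteq>
    (mset ` {xs. set xs \<subseteq> {0..k} \<and> length xs \<le> b}) \<times> Pow {0..k}"
  proof
    fix p assume "p \<in> overpartitions_box k b"
    then obtain M S where p: "p = (M, S)" and h: "\<forall>x \<in># M. 0 < x \<and> x \<le> k"
      "size M \<le> b" "S \<subseteq> set_mset M" by (auto simp: overpartitions_box_def)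
    obtain xs where xs: "M = mset xs" using ex_mset by metis
    have "M \<in> mset ` {xs. set xs \<subseteq> {0..k} \<and> length xs \<le> b}"
      using h xs by auto
    moreover have "S \<in> Pow {0..k}" using h by auto
    ultimately show "p \<in> (mset ` {xs. set xs \<subseteq> {0..k} \<and> length xs \<le> b}) \<times> Pow {0..k}"
      using p by auto
  qed
  moreover have "finite ((mset ` {xs. set xs \<subseteq> {0..k} \<and> length xs \<le> b}) \<times> Pow {0..k})"
    by (intro finite_cartesian_product finite_imageI finite_lists_length_le) auto
  ultimately show ?thesis by (rule finite_subset)
qed

definition dec :: "nat multiset \<Rightarrow> nat multiset" where
  "dec M = image_mset (\<lambda>x. x - 1) (filter_mset (\<lambda>x. 1 < x) M)"

definition inc :: "nat \<Rightarrow> nat multiset \<Rightarrow> nat multiset" where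
  "inc b M = image_mset Suc M + replicate_mset (b - size M) 1"

lemma filter_rep1: "filter_mset (\<lambda>x. 1 < x) (replicate_mset n (1::nat)) = {#}"
  by (induction n) auto

lemma dec_inc:
  assumes "\<forall>x\<in>#M. 0 < x"
  shows "dec (inc b M) = M"
proof -
  have "filter_mset (\<lambda>x. 0 < x) M = M"
    using assms by (metis filter_mset_True filter_mset_cong)
  hence "filter_mset (\<lambda>x. 1 < x) (inc b M) = image_mset Suc M"
    unfolding inc_def by (simp add: filter_mset_image_mset filter_rep1 comp_def)
  thus ?thesis unfolding dec_def by (simp add: multiset.map_comp comp_def)
qed

lemma inc_dec:
  assumes "\<forall>x\<in>#M. 0 < x" "size M = b"
  shows "inc b (dec M) = M"
proof -
  have p: "M = filter_mset (\<lambda>x. 1 < x) M + filter_mset (\<lambda>x. \<not> 1 < x) M"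
    by (rule multiset_partition)
  have "filter_mset (\<lambda>x. \<not> 1 < x) M = filter_mset (\<lambda>x. x = 1) M"
    using assms(1) by (intro filter_mset_cong) auto
  also have "\<dots> = replicate_mset (count M 1) 1" by (rule filter_eq_replicate_mset)
  finally have e1: "filter_mset (\<lambda>x. \<not> 1 < x) M = replicate_mset (count M 1) 1" .
  have e2: "image_mset Suc (dec M) = filter_mset (\<lambda>x. 1 < x) M"
    unfolding dec_def multiset.map_comp comp_def
    by (rule image_mset_cong[of _ _ "\<lambda>x. x", simplified]) auto
  have "size M = size (filter_mset (\<lambda>x. 1 < x) M) + size (filter_mset (\<lambda>x. \<not> 1 < x) M)"
  proof -
    have h: "size (filter_mset (\<lambda>x. 1 < x) M + filter_mset (\<lambda>x. \<not> 1 < x) M) =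
      size (filter_mset (\<lambda>x. 1 < x) M) + size (filter_mset (\<lambda>x. \<not> 1 < x) M)"
      by (rule size_union)
    show ?thesis using h by (simp only: p[symmetric])
  qed
  hence "size M = size (dec M) + count M 1"
    unfolding e1 dec_def by simp
  hence "b - size (dec M) = count M 1" using assms(2) by simp
  thus ?thesis unfolding inc_def using e1 e2 p by simp
qed

lemma size_inc: "size M \<le> b \<Longrightarrow> size (inc b M) = b"
  unfolding inc_def by simp

lemma sum_mset_Suc: "sum_mset (image_mset Suc M) = sum_mset M + size M"
  by (induction M) auto

lemma sum_inc: "size M \<le> b \<Longrightarrow> sum_mset (inc b M) = sum_mset M + b"
  unfolding inc_def by (simp add: sum_mset_Suc)

lemma set_inc: "x \<in># inc b M \<Longrightarrow> x = 1 \<or> (\<exists>y. y \<in># M \<and> x = Suc y)"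
  unfolding inc_def by (auto split: if_splits)

lemma set_dec: "x \<in># dec M \<Longrightarrow> Suc x \<in># M"
  unfolding dec_def by auto

lemma size_dec: "size (dec M) \<le> size M"
  unfolding dec_def by (simp add: size_filter_mset_lesseq)

lemma dec_mem: "1 < x \<Longrightarrow> x \<in># M \<Longrightarrow> x - 1 \<in># dec M"
  unfolding dec_def by force

lemma sum_split3:
  assumes "finite B" "B = P0 \<union> PA \<union> PB" "P0 \<inter> PA = {}" "P0 \<inter> PB = {}" "PA \<inter> PB = {}"
  shows "sum f B = sum f P0 + sum f PA + sum f PB"
proof -
  have fin: "finite P0" "finite PA" "finite PB" using assms by auto
  have "sum f B = sum f (P0 \<union> PA) + sum f PB"
    using assms fin by (simp add: sum.union_disjoint Int_Un_distrib2)
  also have "sum f (P0 \<union> PA) = sum f P0 + sum f PA"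
    using assms fin by (simp add: sum.union_disjoint)
  finally show ?thesis .
qed

lemma cnt2: "k \<in># M \<Longrightarrow> count M k \<noteq> Suc 0 \<Longrightarrow> 2 \<le> count M k"
  by (metis count_greater_zero_iff One_nat_def Suc_1 Suc_leI le_neq_implies_less)

lemma rec2:
  assumes "0 < k" "0 < b"
  shows "G k b q t = G (k-1) b q t + q^k * G k (b-1) q t + t * q^k * G (k-1) (b-1) q t"
proof -
  define f where "f = (\<lambda>(M::nat multiset, S::nat set). t ^ card S * q ^ sum_mset M)"
  define B where "B = overpartitions_box k b"
  define P0 where "P0 = {p\<in>B. k \<notin># fst p}"
  define PA where "PA = {p\<in>B. k \<in># fst p \<and> (k \<notin> snd p \<or> 2 \<le> count (fst p) k)}"
  define PB where "PB = {p\<in>B. k \<in> snd p \<and> count (fst p) k = 1}"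
  have GB: "G k b q t = sum f B" unfolding G_def B_def f_def ..
  have "B = P0 \<union> PA \<union> PB"
    unfolding P0_def PA_def PB_def by (auto simp: B_def overpartitions_box_def cnt2)
  moreover have "P0 \<inter> PA = {}" "P0 \<inter> PB = {}" "PA \<inter> PB = {}"
    unfolding P0_def PA_def PB_def by (auto simp: B_def overpartitions_box_def)
  moreover have "finite B" by (simp add: B_def finite_box)
  ultimately have split: "sum f B = sum f P0 + sum f PA + sum f PB"
    by (intro sum_split3)
  have "P0 = overpartitions_box (k-1) b"
    unfolding P0_def B_def overpartitions_box_def using assms
    by (auto, metis le_neq_implies_less less_Suc_eq_le Suc_pred, force)
  hence s0: "sum f P0 = G (k-1) b q t" unfolding G_def f_def by simp
  have sA: "sum f PA = q^k * G k (b-1) q t"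
    unfolding G_def sum_distrib_left
  proof (rule sym, rule sum.reindex_bij_witness[where j = "\<lambda>(M,S). (add_mset k M, S)"
        and i = "\<lambda>(M,S). (M - {#k#}, S)"])
    fix a assume "a \<in> overpartitions_box k (b-1)"
    then show "(case (case a of (M, S) \<Rightarrow> (add_mset k M, S)) of (M, S) \<Rightarrow> (M - {#k#}, S)) = a"
      by (cases a) auto
  next
    fix a assume "a \<in> overpartitions_box k (b-1)"
    then show "(case a of (M, S) \<Rightarrow> (add_mset k M, S)) \<in> PA"
      using assms unfolding PA_def B_def overpartitions_box_def by (cases a) auto
  next
    fix a assume "a \<in> PA"
    then show "(case (case a of (M, S) \<Rightarrow> (M - {#k#}, S)) of (M, S) \<Rightarrow> (add_mset k M, S)) = a"
      unfolding PA_def by (cases a) auto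
  next
    fix a assume "a \<in> PA"
    then show "(case a of (M, S) \<Rightarrow> (M - {#k#}, S)) \<in> overpartitions_box k (b-1)"
      using assms unfolding PA_def B_def overpartitions_box_def
      apply (cases a)
      apply (auto dest: in_diffD simp: size_Diff_singleton in_diff_count)
      done
  next
    fix a assume "a \<in> overpartitions_box k (b-1)"
    then show "f (case a of (M, S) \<Rightarrow> (add_mset k M, S)) =
       q ^ k * (case a of (M, S) \<Rightarrow> t ^ card S * q ^ sum_mset M)"
      unfolding f_def by (cases a) (auto simp: power_add algebra_simps)
  qed
  have sB: "sum f PB = t * q^k * G (k-1) (b-1) q t"
    unfolding G_def sum_distrib_left
  proof (rule sym, rule sum.reindex_bij_witness[where j = "\<lambda>(M,S). (add_mset k M, insert k S)"
        and i = "\<lambda>(M,S). (M - {#k#}, S - {k})"])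
    fix a assume "a \<in> overpartitions_box (k-1) (b-1)"
    then show "(case (case a of (M, S) \<Rightarrow> (add_mset k M, insert k S)) of (M, S) \<Rightarrow> (M - {#k#}, S - {k})) = a"
      using assms unfolding overpartitions_box_def by (cases a) force
  next
    fix a assume "a \<in> overpartitions_box (k-1) (b-1)"
    then show "(case a of (M, S) \<Rightarrow> (add_mset k M, insert k S)) \<in> PB"
      using assms unfolding PB_def B_def overpartitions_box_def
      by (cases a) (force simp: count_eq_zero_iff)
  next
    fix a assume "a \<in> PB"
    then show "(case (case a of (M, S) \<Rightarrow> (M - {#k#}, S - {k})) of (M, S) \<Rightarrow> (add_mset k M, insert k S)) = a"
      unfolding PB_def by (cases a) (auto intro!: insert_DiffM simp flip: count_greater_zero_iff)
  next
    fix a assume "a \<in> PB"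
    then obtain M S where aMS: "a = (M, S)" and h: "\<forall>x\<in>#M. 0 < x \<and> x \<le> k"
      "size M \<le> b" "S \<subseteq> set_mset M" "k \<in> S" "count M k = 1"
      unfolding PB_def B_def overpartitions_box_def by (cases a) auto
    have kM: "k \<in># M" using h by auto
    have "\<forall>x\<in>#M - {#k#}. 0 < x \<and> x \<le> k - 1"
    proof
      fix x assume x: "x \<in># M - {#k#}"
      then have "x \<in># M" by (rule in_diffD)
      moreover have "x \<noteq> k" using x h(5) by (auto simp: in_diff_count)
      ultimately show "0 < x \<and> x \<le> k - 1" using h(1) by force
    qed
    moreover have "size (M - {#k#}) \<le> b - 1" using kM h(2) by (simp add: size_Diff_singleton)
    moreover have "S - {k} \<subseteq> set_mset (M - {#k#})"
    proof
      fix s assume s: "s \<in> S - {k}"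
      then have "0 < count M s" using h(3) by auto
      then show "s \<in> set_mset (M - {#k#})" using s by (auto simp: in_diff_count)
    qed
    ultimately show "(case a of (M, S) \<Rightarrow> (M - {#k#}, S - {k})) \<in> overpartitions_box (k-1) (b-1)"
      unfolding aMS overpartitions_box_def by auto
  next
    fix a assume a: "a \<in> overpartitions_box (k-1) (b-1)"
    obtain M S where aMS: "a = (M, S)" by (cases a)
    have "k \<notin> S" using a assms unfolding aMS overpartitions_box_def by force
    moreover have "finite S" using a unfolding aMS overpartitions_box_def
      by (auto intro: finite_subset)
    ultimately show "f (case a of (M, S) \<Rightarrow> (add_mset k M, insert k S)) =
       t * q ^ k * (case a of (M, S) \<Rightarrow> t ^ card S * q ^ sum_mset M)"
      unfolding f_def aMS by (auto simp: power_add algebra_simps)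
  qed
  show ?thesis using GB split s0 sA sB by simp
qed

lemma size_dec_count:
  assumes "\<forall>x\<in>#M. 0 < x"
  shows "size M = size (dec M) + count M 1"
proof -
  have p: "M = filter_mset (\<lambda>x. 1 < x) M + filter_mset (\<lambda>x. \<not> 1 < x) M"
    by (rule multiset_partition)
  have "filter_mset (\<lambda>x. \<not> 1 < x) M = filter_mset (\<lambda>x. x = 1) M"
    using assms(1) by (intro filter_mset_cong) auto
  also have "\<dots> = replicate_mset (count M 1) 1" by (rule filter_eq_replicate_mset)
  finally have e1: "filter_mset (\<lambda>x. \<not> 1 < x) M = replicate_mset (count M 1) 1" .
  have "size M = size (filter_mset (\<lambda>x. 1 < x) M) + size (filter_mset (\<lambda>x. \<not> 1 < x) M)"
  proof -
    have h: "size (filter_mset (\<lambda>x. 1 < x) M + filter_mset (\<lambda>x. \<not> 1 < x) M) =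
      size (filter_mset (\<lambda>x. 1 < x) M) + size (filter_mset (\<lambda>x. \<not> 1 < x) M)"
      by (rule size_union)
    show ?thesis using h by (simp only: p[symmetric])
  qed
  thus ?thesis unfolding e1 dec_def by simp
qed

lemma dec_pos: "x \<in># dec M \<Longrightarrow> 0 < x"
  unfolding dec_def by auto

lemma card_Suc_img: "card (Suc ` S) = card S"
  by (simp add: card_image)

lemma Suc_dec_img: "\<forall>x\<in>S. 0 < x \<Longrightarrow> Suc ` ((\<lambda>x. x - 1) ` S) = S"
  by (force simp: image_image)

lemma rec1:
  assumes "0 < k" "0 < b"
  shows "G k b q t = G k (b-1) q t + q^b * G (k-1) b q t + t * q^b * G (k-1) (b-1) q t"
proof -
  define f where "f = (\<lambda>(M::nat multiset, S::nat set). t ^ card S * q ^ sum_mset M)"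
  define B where "B = overpartitions_box k b"
  define P0 where "P0 = {p\<in>B. size (fst p) \<le> b - 1}"
  define PA where "PA = {p\<in>B. size (fst p) = b \<and> 1 \<notin> snd p}"
  define PB where "PB = {p\<in>B. size (fst p) = b \<and> 1 \<in> snd p}"
  have GB: "G k b q t = sum f B" unfolding G_def B_def f_def ..
  have "B = P0 \<union> PA \<union> PB"
    unfolding P0_def PA_def PB_def by (auto simp: B_def overpartitions_box_def)
  moreover have "P0 \<inter> PA = {}" "P0 \<inter> PB = {}" "PA \<inter> PB = {}"
    unfolding P0_def PA_def PB_def using assms by (auto simp: B_def overpartitions_box_def)
  moreover have "finite B" by (simp add: B_def finite_box)
  ultimately have split: "sum f B = sum f P0 + sum f PA + sum f PB"
    by (intro sum_split3)
  have "P0 = overpartitions_box k (b-1)"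
    unfolding P0_def B_def overpartitions_box_def using assms by auto
  hence s0: "sum f P0 = G k (b-1) q t" unfolding G_def f_def by simp
  have sA: "sum f PA = q^b * G (k-1) b q t"
    unfolding G_def sum_distrib_left
  proof (rule sym, rule sum.reindex_bij_witness[where j = "\<lambda>(M,S). (inc b M, Suc ` S)"
        and i = "\<lambda>(M,S). (dec M, (\<lambda>x. x - 1) ` S)"])
    fix a assume "a \<in> overpartitions_box (k-1) b"
    then obtain M S where aMS: "a = (M, S)" and h: "\<forall>x\<in>#M. 0 < x \<and> x \<le> k - 1"
      "size M \<le> b" "S \<subseteq> set_mset M" unfolding overpartitions_box_def by auto
    have "dec (inc b M) = M" using h by (intro dec_inc) auto
    then show "(case (case a of (M, S) \<Rightarrow> (inc b M, Suc ` S)) of (M, S) \<Rightarrow> (dec M, (\<lambda>x. x - 1) ` S)) = a"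
      unfolding aMS by (simp add: image_image)
  next
    fix a assume "a \<in> overpartitions_box (k-1) b"
    then obtain M S where aMS: "a = (M, S)" and h: "\<forall>x\<in>#M. 0 < x \<and> x \<le> k - 1"
      "size M \<le> b" "S \<subseteq> set_mset M" unfolding overpartitions_box_def by auto
    have "\<forall>x\<in>#inc b M. 0 < x \<and> x \<le> k"
    proof
      fix x assume "x \<in># inc b M"
      from set_inc[OF this] show "0 < x \<and> x \<le> k"
      proof
        assume "x = 1" then show ?thesis using assms by simp
      next
        assume "\<exists>y. y \<in># M \<and> x = Suc y"
        then obtain y where "y \<in># M" "x = Suc y" by blast
        then show ?thesis using h(1) assms by auto
      qed
    qed
    moreover have "size (inc b M) = b" using h by (simp add: size_inc)
    moreover have "Suc ` S \<subseteq> set_mset (inc b M)" using h(3) unfolding inc_def by auto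
    moreover have "1 \<notin> Suc ` S"
    proof
      assume "1 \<in> Suc ` S" then have "0 \<in> S" by auto
      then show False using h by auto
    qed
    ultimately show "(case a of (M, S) \<Rightarrow> (inc b M, Suc ` S)) \<in> PA"
      unfolding aMS PA_def B_def overpartitions_box_def by simp
  next
    fix a assume "a \<in> PA"
    then obtain M S where aMS: "a = (M, S)" and h: "\<forall>x\<in>#M. 0 < x \<and> x \<le> k"
      "size M = b" "S \<subseteq> set_mset M" unfolding PA_def B_def overpartitions_box_def by auto
    have "inc b (dec M) = M" using h by (intro inc_dec) auto
    moreover have "Suc ` ((\<lambda>x. x - 1) ` S) = S" using h by (intro Suc_dec_img) auto
    ultimately show "(case (case a of (M, S) \<Rightarrow> (dec M, (\<lambda>x. x - 1) ` S)) of (M, S) \<Rightarrow> (inc b M, Suc ` S)) = a"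
      unfolding aMS by simp
  next
    fix a assume "a \<in> PA"
    then obtain M S where aMS: "a = (M, S)" and h: "\<forall>x\<in>#M. 0 < x \<and> x \<le> k"
      "size M = b" "S \<subseteq> set_mset M" "1 \<notin> S"
      unfolding PA_def B_def overpartitions_box_def by auto
    have "\<forall>x\<in>#dec M. 0 < x \<and> x \<le> k - 1"
    proof
      fix x assume "x \<in># dec M"
      then have "Suc x \<in># M" "0 < x" by (rule set_dec, rule dec_pos)
      then show "0 < x \<and> x \<le> k - 1" using h(1) by fastforce
    qed
    moreover have "size (dec M) \<le> b" using h size_dec[of M] by simp
    moreover have "(\<lambda>x. x - 1) ` S \<subseteq> set_mset (dec M)"
    proof
      fix y assume "y \<in> (\<lambda>x. x - 1) ` S"
      then obtain s where s: "s \<in> S" "y = s - 1" by auto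
      have "s \<in># M" using s h(3) by auto
      hence "0 < s" using h(1) by auto
      moreover have "s \<noteq> 1" using s h by auto
      ultimately have "1 < s" by linarith
      then show "y \<in> set_mset (dec M)" using s h(3) dec_mem by auto
    qed
    ultimately show "(case a of (M, S) \<Rightarrow> (dec M, (\<lambda>x. x - 1) ` S)) \<in> overpartitions_box (k-1) b"
      unfolding aMS overpartitions_box_def by simp
  next
    fix a assume "a \<in> overpartitions_box (k-1) b"
    then obtain M S where aMS: "a = (M, S)" and h: "size M \<le> b"
      unfolding overpartitions_box_def by auto
    show "f (case a of (M, S) \<Rightarrow> (inc b M, Suc ` S)) =
       q ^ b * (case a of (M, S) \<Rightarrow> t ^ card S * q ^ sum_mset M)"
      unfolding f_def aMS using h by (simp add: card_Suc_img sum_inc power_add algebra_simps)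
  qed
  have sB: "sum f PB = t * q^b * G (k-1) (b-1) q t"
    unfolding G_def sum_distrib_left
  proof (rule sym, rule sum.reindex_bij_witness[where j = "\<lambda>(M,S). (inc b M, insert 1 (Suc ` S))"
        and i = "\<lambda>(M,S). (dec M, (\<lambda>x. x - 1) ` (S - {1}))"])
    fix a assume "a \<in> overpartitions_box (k-1) (b-1)"
    then obtain M S where aMS: "a = (M, S)" and h: "\<forall>x\<in>#M. 0 < x \<and> x \<le> k - 1"
      "size M \<le> b - 1" "S \<subseteq> set_mset M" unfolding overpartitions_box_def by auto
    have "dec (inc b M) = M" using h by (intro dec_inc) auto
    moreover have "insert 1 (Suc ` S) - {1} = Suc ` S"
    proof -
      have "1 \<notin> Suc ` S"
      proof
        assume "1 \<in> Suc ` S" then have "0 \<in> S" by auto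
        then show False using h by auto
      qed
      thus ?thesis by auto
    qed
    ultimately show "(case (case a of (M, S) \<Rightarrow> (inc b M, insert 1 (Suc ` S))) of (M, S) \<Rightarrow> (dec M, (\<lambda>x. x - 1) ` (S - {1}))) = a"
      unfolding aMS by (simp add: image_image)
  next
    fix a assume "a \<in> overpartitions_box (k-1) (b-1)"
    then obtain M S where aMS: "a = (M, S)" and h: "\<forall>x\<in>#M. 0 < x \<and> x \<le> k - 1"
      "size M \<le> b - 1" "S \<subseteq> set_mset M" unfolding overpartitions_box_def by auto
    have "\<forall>x\<in>#inc b M. 0 < x \<and> x \<le> k"
    proof
      fix x assume "x \<in># inc b M"
      from set_inc[OF this] show "0 < x \<and> x \<le> k"
      proof
        assume "x = 1" then show ?thesis using assms by simp
      next
        assume "\<exists>y. y \<in># M \<and> x = Suc y"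
        then obtain y where "y \<in># M" "x = Suc y" by blast
        then show ?thesis using h(1) assms by auto
      qed
    qed
    moreover have "size (inc b M) = b" using h by (simp add: size_inc)
    moreover have "1 \<in># inc b M" using h assms unfolding inc_def by simp
    moreover have "Suc ` S \<subseteq> set_mset (inc b M)" using h(3) unfolding inc_def by auto
    ultimately show "(case a of (M, S) \<Rightarrow> (inc b M, insert 1 (Suc ` S))) \<in> PB"
      unfolding aMS PB_def B_def overpartitions_box_def by simp
  next
    fix a assume "a \<in> PB"
    then obtain M S where aMS: "a = (M, S)" and h: "\<forall>x\<in>#M. 0 < x \<and> x \<le> k"
      "size M = b" "S \<subseteq> set_mset M" "1 \<in> S" unfolding PB_def B_def overpartitions_box_def by auto
    have "inc b (dec M) = M" using h by (intro inc_dec) auto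
    moreover have "Suc ` ((\<lambda>x. x - 1) ` (S - {1})) = S - {1}" using h by (intro Suc_dec_img) auto
    moreover have "insert 1 (S - {1}) = S" using h by auto
    ultimately show "(case (case a of (M, S) \<Rightarrow> (dec M, (\<lambda>x. x - 1) ` (S - {1}))) of (M, S) \<Rightarrow> (inc b M, insert 1 (Suc ` S))) = a"
      unfolding aMS by simp
  next
    fix a assume "a \<in> PB"
    then obtain M S where aMS: "a = (M, S)" and h: "\<forall>x\<in>#M. 0 < x \<and> x \<le> k"
      "size M = b" "S \<subseteq> set_mset M" "1 \<in> S"
      unfolding PB_def B_def overpartitions_box_def by auto
    have "\<forall>x\<in>#dec M. 0 < x \<and> x \<le> k - 1"
    proof
      fix x assume "x \<in># dec M"
      then have "Suc x \<in># M" "0 < x" by (rule set_dec, rule dec_pos)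
      then show "0 < x \<and> x \<le> k - 1" using h(1) by fastforce
    qed
    moreover have "size (dec M) \<le> b - 1"
    proof -
      have "size M = size (dec M) + count M 1" using h by (intro size_dec_count) auto
      moreover have "0 < count M 1" using h by auto
      ultimately show ?thesis using h(2) by linarith
    qed
    moreover have "(\<lambda>x. x - 1) ` (S - {1}) \<subseteq> set_mset (dec M)"
    proof
      fix y assume "y \<in> (\<lambda>x. x - 1) ` (S - {1})"
      then obtain s where s: "s \<in> S" "s \<noteq> 1" "y = s - 1" by auto
      have "s \<in># M" using s h(3) by auto
      hence "0 < s" using h(1) by auto
      moreover have "s \<noteq> 1" using s h by auto
      ultimately have "1 < s" by linarith
      then show "y \<in> set_mset (dec M)" using s h(3) dec_mem by auto
    qed
    ultimately show "(case a of (M, S) \<Rightarrow> (dec M, (\<lambda>x. x - 1) ` (S - {1}))) \<in> overpartitions_box (k-1) (b-1)"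
      unfolding aMS overpartitions_box_def by simp
  next
    fix a assume a: "a \<in> overpartitions_box (k-1) (b-1)"
    then obtain M S where aMS: "a = (M, S)" and h: "\<forall>x\<in>#M. 0 < x" "size M \<le> b - 1"
      "S \<subseteq> set_mset M" unfolding overpartitions_box_def by auto
    have fS: "finite S" using h(3) by (rule finite_subset) simp
    have "1 \<notin> Suc ` S"
    proof
      assume "1 \<in> Suc ` S" then have "0 \<in> S" by auto
      then show False using h by auto
    qed
    hence "card (insert 1 (Suc ` S)) = card S + 1" using fS by (simp add: card_Suc_img)
    moreover have "sum_mset (inc b M) = sum_mset M + b" using h by (intro sum_inc) auto
    ultimately show "f (case a of (M, S) \<Rightarrow> (inc b M, insert 1 (Suc ` S))) =
       t * q ^ b * (case a of (M, S) \<Rightarrow> t ^ card S * q ^ sum_mset M)"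
      unfolding f_def aMS by (simp add: power_add algebra_simps)
  qed
  show ?thesis using GB split s0 sA sB by simp
qed

theorem theorem2p3:
  fixes q t :: "'a::comm_ring_1" and m n :: nat
  assumes "0 < m" and "0 < n"
  shows "(over_gauss (m + n) n q t =
           over_gauss (m + n - 1) (n - 1) q t + q ^ n * over_gauss (m + n - 1) n q t
           + t * q ^ n * over_gauss (m + n - 2) (n - 1) q t)
       \<and> ( over_gauss (m + n) n q t =
           over_gauss (m + n - 1) n q t + q ^ m * over_gauss (m + n - 1) (n - 1) q t
           + t * q ^ m * over_gauss (m + n - 2) (n - 1) q t)"
proof -
  have e: "over_gauss (m + n) n q t = G m n q t"
    "over_gauss (m + n - 1) (n - 1) q t = G m (n - 1) q t"
    "over_gauss (m + n - 1) n q t = G (m - 1) n q t"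
    "over_gauss (m + n - 2) (n - 1) q t = G (m - 1) (n - 1) q t"
    using assms by (simp_all add: over_gauss_G)
  show ?thesis unfolding e using rec1[OF assms, of q t] rec2[OF assms, of q t] by (intro conjI)
qed

end
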